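(* Let $\Sigma=\Sigma_p\cup\Sigma_d$ be a finite propositional alphabet partitioned into parameter symbols $\Sigma_p$ and defined symbols $\Sigma_d$. For each $I\in 2^{\Sigma_p}$ let $\pi_I:L^d_p\to 2^{\Sigma_d}$ map $\mathcal{A}$ to $\mathcal{A}^I=\{a\in\Sigma_d\mid \psi_a^I=\mathbf{t}\text{ where }\mathcal{A}(a)=\overline{\psi_a}\}$. Then $L^d_p$ is a parametrisation of $\langle 2^{\Sigma_d},\subseteq\rangle$ through $(\pi_I)_{I\in 2^{\Sigma_p}}$.
   Context: $L_p$ is the set of equivalence classes $\overline\varphi$ (under logical equivalence) of propositional formulas over $\Sigma_p$, ordered by $\overline\varphi\leq\overline\psi$ iff $\varphi\models\psi$; it is a complete lattice. $L^d_p$ is the set of maps $\Sigma_d\to L_p$, ordered pointwise. A complete lattice $L$ is a parametrisation of a complete lattice $K$ through a family $(f_i:L\to K)_{i\in I}$ if each $f_i$ is a surjective lattice morphism (i.e. $f_i(\bigvee X)=\bigvee f_i(X)$ and $f_i(\bigwedge X)=\bigwedge f_i(X)$ for every $X\subseteq L$) and for all $x,y\in L$: $x\leq y$ iff $f_i(x)\leq f_i(y)$ for every $i\in I$. *)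

theory Defs
  imports "HOL-Library.FuncSet"
begin

datatype 'a form =
    Atom 'a
  | FFalse
  | FTrue
  | Neg "'a form"
  | Conj "'a form" "'a form"
  | Disj "'a form" "'a form"
  | Impl "'a form" "'a form"

fun atoms :: "'a form \<Rightarrow> 'a set" where
  "atoms (Atom a) = {a}"
| "atoms FFalse = {}"
| "atoms FTrue = {}"
| "atoms (Neg p) = atoms p"
| "atoms (Conj p q) = atoms p \<union> atoms q"
| "atoms (Disj p q) = atoms p \<union> atoms q"
| "atoms (Impl p q) = atoms p \<union> atoms q"

fun eval :: "'a set \<Rightarrow> 'a form \<Rightarrow> bool" where
  "eval I (Atom a) = (a \<in> I)"
| "eval I FFalse = False"
| "eval I FTrue = True"
| "eval I (Neg p) = (\<not> eval I p)"
| "eval I (Conj p q) = (eval I p \<and> eval I q)"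
| "eval I (Disj p q) = (eval I p \<or> eval I q)"
| "eval I (Impl p q) = (eval I p \<longrightarrow> eval I q)"

definition forms_over :: "'a set \<Rightarrow> 'a form set" where
  "forms_over Sp = {p. atoms p \<subseteq> Sp}"

definition entails :: "'a set \<Rightarrow> 'a form \<Rightarrow> 'a form \<Rightarrow> bool" where
  "entails Sp p q \<longleftrightarrow> (\<forall>I. I \<subseteq> Sp \<longrightarrow> eval I p \<longrightarrow> eval I q)"

definition lequiv :: "'a set \<Rightarrow> 'a form \<Rightarrow> 'a form \<Rightarrow> bool" where
  "lequiv Sp p q \<longleftrightarrow> entails Sp p q \<and> entails Sp q p"

definition cls :: "'a set \<Rightarrow> 'a form \<Rightarrow> 'a form set" where
  "cls Sp p = {q \<in> forms_over Sp. lequiv Sp p q}"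

definition Lp :: "'a set \<Rightarrow> 'a form set set" where
  "Lp Sp = cls Sp ` forms_over Sp"

definition leq_p :: "'a set \<Rightarrow> 'a form set \<Rightarrow> 'a form set \<Rightarrow> bool" where
  "leq_p Sp X Y \<longleftrightarrow>
     (\<exists>p q. p \<in> forms_over Sp \<and> q \<in> forms_over Sp \<and> X = cls Sp p \<and> Y = cls Sp q
            \<and> entails Sp p q)"

definition Ldp :: "'a set \<Rightarrow> 'a set \<Rightarrow> ('a \<Rightarrow> 'a form set) set" where
  "Ldp Sp Sd = Sd \<rightarrow>\<^sub>E Lp Sp"

definition leq_dp :: "'a set \<Rightarrow> 'a set \<Rightarrow> ('a \<Rightarrow> 'a form set) \<Rightarrow> ('a \<Rightarrow> 'a form set) \<Rightarrow> bool" where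
  "leq_dp Sp Sd A B \<longleftrightarrow> (\<forall>a\<in>Sd. leq_p Sp (A a) (B a))"

definition proj :: "'a set \<Rightarrow> 'a set \<Rightarrow> 'a set \<Rightarrow> ('a \<Rightarrow> 'a form set) \<Rightarrow> 'a set" where
  "proj Sp Sd I A =
     {a \<in> Sd. eval I (SOME psi. psi \<in> forms_over Sp \<and> A a = cls Sp psi)}"

definition is_lub_on :: "'b set \<Rightarrow> ('b \<Rightarrow> 'b \<Rightarrow> bool) \<Rightarrow> 'b set \<Rightarrow> 'b \<Rightarrow> bool" where
  "is_lub_on C le X s \<longleftrightarrow> s \<in> C \<and> (\<forall>x\<in>X. le x s) \<and> (\<forall>u\<in>C. (\<forall>x\<in>X. le x u) \<longrightarrow> le s u)"

definition is_glb_on :: "'b set \<Rightarrow> ('b \<Rightarrow> 'b \<Rightarrow> bool) \<Rightarrow> 'b set \<Rightarrow> 'b \<Rightarrow> bool" where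
  "is_glb_on C le X s \<longleftrightarrow> s \<in> C \<and> (\<forall>x\<in>X. le s x) \<and> (\<forall>u\<in>C. (\<forall>x\<in>X. le u x) \<longrightarrow> le u s)"

definition partial_order_on_carrier :: "'b set \<Rightarrow> ('b \<Rightarrow> 'b \<Rightarrow> bool) \<Rightarrow> bool" where
  "partial_order_on_carrier C le \<longleftrightarrow>
     (\<forall>x\<in>C. le x x) \<and>
     (\<forall>x\<in>C. \<forall>y\<in>C. le x y \<and> le y x \<longrightarrow> x = y) \<and>
     (\<forall>x\<in>C. \<forall>y\<in>C. \<forall>z\<in>C. le x y \<and> le y z \<longrightarrow> le x z)"

definition complete_lattice_on :: "'b set \<Rightarrow> ('b \<Rightarrow> 'b \<Rightarrow> bool) \<Rightarrow> bool" where
  "complete_lattice_on C le \<longleftrightarrow> partial_order_on_carrier C le \<and>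
     (\<forall>X\<subseteq>C. (\<exists>s. is_lub_on C le X s) \<and> (\<exists>s. is_glb_on C le X s))"

definition complete_lattice_morphism ::
  "'b set \<Rightarrow> ('b \<Rightarrow> 'b \<Rightarrow> bool) \<Rightarrow> 'c set \<Rightarrow> ('c \<Rightarrow> 'c \<Rightarrow> bool) \<Rightarrow> ('b \<Rightarrow> 'c) \<Rightarrow> bool" where
  "complete_lattice_morphism C le K le' f \<longleftrightarrow>
     f ` C \<subseteq> K \<and>
     (\<forall>X\<subseteq>C. \<forall>s. is_lub_on C le X s \<longrightarrow> is_lub_on K le' (f ` X) (f s)) \<and>
     (\<forall>X\<subseteq>C. \<forall>s. is_glb_on C le X s \<longrightarrow> is_glb_on K le' (f ` X) (f s))"

definition parametrisation ::
  "'b set \<Rightarrow> ('b \<Rightarrow> 'b \<Rightarrow> bool) \<Rightarrow> 'c set \<Rightarrow> ('c \<Rightarrow> 'c \<Rightarrow> bool) \<Rightarrow> 'i set \<Rightarrow> ('i \<Rightarrow> 'b \<Rightarrow> 'c) \<Rightarrow> bool" where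
  "parametrisation C le K le' J f \<longleftrightarrow>
     complete_lattice_on C le \<and> complete_lattice_on K le' \<and>
     (\<forall>i\<in>J. complete_lattice_morphism C le K le' (f i) \<and> f i ` C = K) \<and>
     (\<forall>x\<in>C. \<forall>y\<in>C. le x y \<longleftrightarrow> (\<forall>i\<in>J. le' (f i x) (f i y)))"

end

theory Submission
  imports Defs
begin

definition models :: "'a set \<Rightarrow> 'a form \<Rightarrow> 'a set set" where
  "models Sp p = {I. I \<subseteq> Sp \<and> eval I p}"

definition mods :: "'a set \<Rightarrow> 'a form set \<Rightarrow> 'a set set" where
  "mods Sp X = {I. I \<subseteq> Sp \<and> (\<exists>p\<in>X. eval I p)}"

lemma lequiv_models: "lequiv Sp p q \<longleftrightarrow> models Sp p = models Sp q"
  unfolding lequiv_def entails_def models_def by auto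

lemma mods_cls: "p \<in> forms_over Sp \<Longrightarrow> mods Sp (cls Sp p) = models Sp p"
  unfolding mods_def cls_def models_def lequiv_def entails_def by blast

lemma mods_sub: "mods Sp X \<subseteq> Pow Sp"
  unfolding mods_def by auto

lemma Lp_cases: "X \<in> Lp Sp \<Longrightarrow> \<exists>p. p \<in> forms_over Sp \<and> X = cls Sp p"
  unfolding Lp_def by auto

lemma leq_p_iff:
  assumes "X \<in> Lp Sp" "Y \<in> Lp Sp"
  shows "leq_p Sp X Y \<longleftrightarrow> mods Sp X \<subseteq> mods Sp Y"
proof
  assume "leq_p Sp X Y"
  then obtain p q where "p \<in> forms_over Sp" "q \<in> forms_over Sp" "X = cls Sp p" "Y = cls Sp q"
    "entails Sp p q" unfolding leq_p_def by blast
  then show "mods Sp X \<subseteq> mods Sp Y" by (auto simp: mods_cls models_def entails_def)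
next
  assume h: "mods Sp X \<subseteq> mods Sp Y"
  obtain p where p: "p \<in> forms_over Sp" "X = cls Sp p" using Lp_cases[OF assms(1)] by blast
  obtain q where q: "q \<in> forms_over Sp" "Y = cls Sp q" using Lp_cases[OF assms(2)] by blast
  have "entails Sp p q" using h p q by (auto simp: mods_cls models_def entails_def)
  then show "leq_p Sp X Y" unfolding leq_p_def using p q by blast
qed

lemma mods_inj:
  assumes "X \<in> Lp Sp" "Y \<in> Lp Sp" "mods Sp X = mods Sp Y"
  shows "X = Y"
proof -
  obtain p where p: "p \<in> forms_over Sp" "X = cls Sp p" using Lp_cases[OF assms(1)] by blast
  obtain q where q: "q \<in> forms_over Sp" "Y = cls Sp q" using Lp_cases[OF assms(2)] by blast
  have "models Sp p = models Sp q" using assms(3) p q by (simp add: mods_cls)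
  then show ?thesis using p q unfolding cls_def by (auto simp: lequiv_models)
qed

definition charf :: "'a list \<Rightarrow> 'a set \<Rightarrow> 'a form" where
  "charf xs I = foldr (\<lambda>a f. Conj (if a \<in> I then Atom a else Neg (Atom a)) f) xs FTrue"

lemma eval_charf: "eval J (charf xs I) \<longleftrightarrow> (\<forall>a\<in>set xs. a \<in> J \<longleftrightarrow> a \<in> I)"
  unfolding charf_def by (induction xs) auto

lemma atoms_charf: "atoms (charf xs I) \<subseteq> set xs"
  unfolding charf_def by (induction xs) auto

lemma eval_disjf: "eval J (foldr Disj ps FFalse) \<longleftrightarrow> (\<exists>p\<in>set ps. eval J p)"
  by (induction ps) auto

lemma atoms_disjf: "atoms (foldr Disj ps FFalse) \<subseteq> \<Union>(atoms ` set ps)"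
  by (induction ps) auto

lemma exists_form:
  assumes "finite Sp" "M \<subseteq> Pow Sp"
  shows "\<exists>p\<in>forms_over Sp. models Sp p = M"
proof -
  obtain xs where xs: "set xs = Sp" using finite_list[OF assms(1)] by blast
  have "finite M" using assms finite_subset by blast
  then obtain ms where ms: "set ms = M" using finite_list by blast
  define p where "p = foldr Disj (map (\<lambda>I. charf xs I) ms) FFalse"
  have "atoms p \<subseteq> \<Union>(atoms ` set (map (\<lambda>I. charf xs I) ms))"
    unfolding p_def by (rule atoms_disjf)
  also have "\<dots> \<subseteq> Sp" using atoms_charf xs by (auto intro: subsetD[OF atoms_charf])
  finally have "atoms p \<subseteq> Sp" .
  moreover have "models Sp p = M"
  proof -
    have "J \<in> models Sp p \<longleftrightarrow> J \<in> M" for J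
    proof -
      have "J \<in> models Sp p \<longleftrightarrow> J \<subseteq> Sp \<and> (\<exists>I\<in>M. \<forall>a\<in>Sp. a \<in> J \<longleftrightarrow> a \<in> I)"
        unfolding models_def p_def by (auto simp: eval_disjf eval_charf xs ms)
      also have "\<dots> \<longleftrightarrow> J \<in> M"
      proof
        assume "J \<subseteq> Sp \<and> (\<exists>I\<in>M. \<forall>a\<in>Sp. a \<in> J \<longleftrightarrow> a \<in> I)"
        then obtain I where "I \<in> M" "J \<subseteq> Sp" "\<forall>a\<in>Sp. a \<in> J \<longleftrightarrow> a \<in> I" by blast
        moreover have "I \<subseteq> Sp" using \<open>I \<in> M\<close> assms(2) by blast
        ultimately have "J = I" by (intro set_eqI) blast
        then show "J \<in> M" using \<open>I \<in> M\<close> by simp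
      next
        assume "J \<in> M" then show "J \<subseteq> Sp \<and> (\<exists>I\<in>M. \<forall>a\<in>Sp. a \<in> J \<longleftrightarrow> a \<in> I)"
          using assms(2) by blast
      qed
      finally show ?thesis .
    qed
    then show ?thesis by (intro set_eqI)
  qed
  ultimately show ?thesis unfolding forms_over_def by blast
qed

definition mk :: "'a set \<Rightarrow> 'a set set \<Rightarrow> 'a form set" where
  "mk Sp M = cls Sp (SOME p. p \<in> forms_over Sp \<and> models Sp p = M)"

lemma mk_props:
  assumes "finite Sp" "M \<subseteq> Pow Sp"
  shows "mk Sp M \<in> Lp Sp" "mods Sp (mk Sp M) = M"
proof -
  let ?p = "SOME p. p \<in> forms_over Sp \<and> models Sp p = M"
  have "?p \<in> forms_over Sp \<and> models Sp ?p = M"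
    using someI_ex[of "\<lambda>p. p \<in> forms_over Sp \<and> models Sp p = M"] exists_form[OF assms] by blast
  then show "mk Sp M \<in> Lp Sp" "mods Sp (mk Sp M) = M"
    unfolding mk_def Lp_def by (auto simp: mods_cls)
qed

lemma proj_eq:
  assumes "A \<in> Ldp Sp Sd" "I \<subseteq> Sp"
  shows "proj Sp Sd I A = {a\<in>Sd. I \<in> mods Sp (A a)}"
proof -
  have "eval I (SOME psi. psi \<in> forms_over Sp \<and> A a = cls Sp psi) \<longleftrightarrow> I \<in> mods Sp (A a)"
    if a: "a \<in> Sd" for a
  proof -
    have "A a \<in> Lp Sp" using assms(1) a unfolding Ldp_def by auto
    then have "\<exists>psi. psi \<in> forms_over Sp \<and> A a = cls Sp psi" by (rule Lp_cases)
    then have h: "(SOME psi. psi \<in> forms_over Sp \<and> A a = cls Sp psi) \<in> forms_over Sp \<and>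
       A a = cls Sp (SOME psi. psi \<in> forms_over Sp \<and> A a = cls Sp psi)" by (rule someI_ex)
    then have "A a = cls Sp (SOME psi. psi \<in> forms_over Sp \<and> A a = cls Sp psi)"
       "mods Sp (A a) = models Sp (SOME psi. psi \<in> forms_over Sp \<and> A a = cls Sp psi)"
      by (metis mods_cls)+
    then show ?thesis using assms(2) by (simp add: models_def)
  qed
  then show ?thesis unfolding proj_def by auto
qed

lemma leq_dp_iff:
  assumes "A \<in> Ldp Sp Sd" "B \<in> Ldp Sp Sd"
  shows "leq_dp Sp Sd A B \<longleftrightarrow> (\<forall>a\<in>Sd. mods Sp (A a) \<subseteq> mods Sp (B a))"
proof -
  have "\<forall>a\<in>Sd. leq_p Sp (A a) (B a) \<longleftrightarrow> mods Sp (A a) \<subseteq> mods Sp (B a)"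
  proof
    fix a assume "a \<in> Sd"
    then have "A a \<in> Lp Sp" "B a \<in> Lp Sp"
      using PiE_mem[OF assms(1)[unfolded Ldp_def]] PiE_mem[OF assms(2)[unfolded Ldp_def]] by auto
    then show "leq_p Sp (A a) (B a) \<longleftrightarrow> mods Sp (A a) \<subseteq> mods Sp (B a)" by (rule leq_p_iff)
  qed
  then show ?thesis unfolding leq_dp_def by blast
qed

lemma Ldp_eq:
  assumes "A \<in> Ldp Sp Sd" "B \<in> Ldp Sp Sd" "\<forall>a\<in>Sd. mods Sp (A a) = mods Sp (B a)"
  shows "A = B"
proof
  fix a show "A a = B a"
  proof (cases "a \<in> Sd")
    case True
    have "A a \<in> Lp Sp" "B a \<in> Lp Sp"
      using PiE_mem[OF assms(1)[unfolded Ldp_def] True] PiE_mem[OF assms(2)[unfolded Ldp_def] True] by auto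
    moreover have "mods Sp (A a) = mods Sp (B a)" using assms(3) True by auto
    ultimately show ?thesis by (rule mods_inj)
  next
    case False then show ?thesis
      using PiE_arb[OF assms(1)[unfolded Ldp_def] False] PiE_arb[OF assms(2)[unfolded Ldp_def] False] by simp
  qed
qed

lemma po_Ldp: "partial_order_on_carrier (Ldp Sp Sd) (leq_dp Sp Sd)"
  unfolding partial_order_on_carrier_def
proof (intro conjI ballI impI)
  fix x y assume "x \<in> Ldp Sp Sd" "y \<in> Ldp Sp Sd" "leq_dp Sp Sd x y \<and> leq_dp Sp Sd y x"
  then show "x = y" by (intro Ldp_eq) (auto simp: leq_dp_iff)
next
  fix x assume "x \<in> Ldp Sp Sd" then show "leq_dp Sp Sd x x" by (simp add: leq_dp_iff)
next
  fix x y z assume "x \<in> Ldp Sp Sd" "y \<in> Ldp Sp Sd" "z \<in> Ldp Sp Sd"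
    "leq_dp Sp Sd x y \<and> leq_dp Sp Sd y z"
  then show "leq_dp Sp Sd x z" by (simp add: leq_dp_iff) blast
qed

lemma lub_Ldp:
  assumes "finite Sp" "X \<subseteq> Ldp Sp Sd"
  defines "s \<equiv> (\<lambda>a. if a \<in> Sd then mk Sp (\<Union>A\<in>X. mods Sp (A a)) else undefined)"
  shows "is_lub_on (Ldp Sp Sd) (leq_dp Sp Sd) X s"
    and "\<forall>a\<in>Sd. mods Sp (s a) = (\<Union>A\<in>X. mods Sp (A a))"
proof -
  have sub: "(\<Union>A\<in>X. mods Sp (A a)) \<subseteq> Pow Sp" for a using mods_sub by blast
  show ms: "\<forall>a\<in>Sd. mods Sp (s a) = (\<Union>A\<in>X. mods Sp (A a))"
    unfolding s_def using mk_props(2)[OF assms(1) sub] by simp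
  have sL: "s \<in> Ldp Sp Sd" unfolding s_def Ldp_def using mk_props(1)[OF assms(1) sub] by auto
  show "is_lub_on (Ldp Sp Sd) (leq_dp Sp Sd) X s"
    unfolding is_lub_on_def
  proof (intro conjI ballI impI)
    show "s \<in> Ldp Sp Sd" by (rule sL)
    fix x assume "x \<in> X"
    then show "leq_dp Sp Sd x s" using sL ms assms(2) by (subst leq_dp_iff) auto
  next
    fix u assume u: "u \<in> Ldp Sp Sd" "\<forall>x\<in>X. leq_dp Sp Sd x u"
    have "\<forall>a\<in>Sd. mods Sp (s a) \<subseteq> mods Sp (u a)"
    proof
      fix a assume a: "a \<in> Sd"
      have "mods Sp (x a) \<subseteq> mods Sp (u a)" if "x \<in> X" for x
        using u that assms(2) a leq_dp_iff by blast
      then show "mods Sp (s a) \<subseteq> mods Sp (u a)" using ms a by auto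
    qed
    then show "leq_dp Sp Sd s u" using sL u(1) by (simp add: leq_dp_iff)
  qed
qed

lemma glb_Ldp:
  assumes "finite Sp" "X \<subseteq> Ldp Sp Sd"
  defines "s \<equiv> (\<lambda>a. if a \<in> Sd then mk Sp (Pow Sp \<inter> (\<Inter>A\<in>X. mods Sp (A a))) else undefined)"
  shows "is_glb_on (Ldp Sp Sd) (leq_dp Sp Sd) X s"
    and "\<forall>a\<in>Sd. mods Sp (s a) = Pow Sp \<inter> (\<Inter>A\<in>X. mods Sp (A a))"
proof -
  have sub: "Pow Sp \<inter> (\<Inter>A\<in>X. mods Sp (A a)) \<subseteq> Pow Sp" for a by blast
  show ms: "\<forall>a\<in>Sd. mods Sp (s a) = Pow Sp \<inter> (\<Inter>A\<in>X. mods Sp (A a))"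
    unfolding s_def using mk_props(2)[OF assms(1) sub] by simp
  have sL: "s \<in> Ldp Sp Sd" unfolding s_def Ldp_def using mk_props(1)[OF assms(1) sub] by auto
  show "is_glb_on (Ldp Sp Sd) (leq_dp Sp Sd) X s"
    unfolding is_glb_on_def
  proof (intro conjI ballI impI)
    show "s \<in> Ldp Sp Sd" by (rule sL)
    fix x assume "x \<in> X"
    then show "leq_dp Sp Sd s x" using sL ms assms(2) by (subst leq_dp_iff) auto
  next
    fix u assume u: "u \<in> Ldp Sp Sd" "\<forall>x\<in>X. leq_dp Sp Sd u x"
    have "\<forall>a\<in>Sd. mods Sp (u a) \<subseteq> mods Sp (s a)"
    proof
      fix a assume a: "a \<in> Sd"
      have "mods Sp (u a) \<subseteq> mods Sp (x a)" if "x \<in> X" for x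
        using u that assms(2) a leq_dp_iff by blast
      moreover have "mods Sp (u a) \<subseteq> Pow Sp" by (rule mods_sub)
      ultimately show "mods Sp (u a) \<subseteq> mods Sp (s a)" using ms a by blast
    qed
    then show "leq_dp Sp Sd u s" using sL u(1) by (simp add: leq_dp_iff)
  qed
qed

lemma lub_unique:
  assumes "partial_order_on_carrier C le" "is_lub_on C le X s" "is_lub_on C le X t"
  shows "s = t"
  using assms unfolding partial_order_on_carrier_def is_lub_on_def by blast

lemma glb_unique:
  assumes "partial_order_on_carrier C le" "is_glb_on C le X s" "is_glb_on C le X t"
  shows "s = t"
  using assms unfolding partial_order_on_carrier_def is_glb_on_def by blast

lemma cl_Pow: "complete_lattice_on (Pow S) (\<subseteq>)"
  unfolding complete_lattice_on_def partial_order_on_carrier_def is_lub_on_def is_glb_on_def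
proof (intro conjI allI impI)
  fix X assume X: "X \<subseteq> Pow S"
  show "\<exists>s. s \<in> Pow S \<and> (\<forall>x\<in>X. x \<subseteq> s) \<and> (\<forall>u\<in>Pow S. (\<forall>x\<in>X. x \<subseteq> u) \<longrightarrow> s \<subseteq> u)"
    by (rule exI[of _ "\<Union>X"]) (use X in blast)
  show "\<exists>s. s \<in> Pow S \<and> (\<forall>x\<in>X. s \<subseteq> x) \<and> (\<forall>u\<in>Pow S. (\<forall>x\<in>X. u \<subseteq> x) \<longrightarrow> u \<subseteq> s)"
    by (rule exI[of _ "S \<inter> \<Inter>X"]) blast
qed auto

theorem proposition4p6:
  fixes Sp Sd :: "'a set"
  assumes "finite Sp" and "finite Sd" and "Sp \<inter> Sd = {}"
  shows "parametrisation (Ldp Sp Sd) (leq_dp Sp Sd) (Pow Sd) (\<subseteq>)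
           (Pow Sp) (\<lambda>I. proj Sp Sd I)"
  unfolding parametrisation_def
proof (intro conjI ballI)
  show "complete_lattice_on (Ldp Sp Sd) (leq_dp Sp Sd)"
    unfolding complete_lattice_on_def using po_Ldp lub_Ldp(1)[OF assms(1)] glb_Ldp(1)[OF assms(1)]
    by blast
  show "complete_lattice_on (Pow Sd) (\<subseteq>)" by (rule cl_Pow)
next
  fix I assume I: "I \<in> Pow Sp"
  then have Is: "I \<subseteq> Sp" by simp
  have pr: "proj Sp Sd I A \<subseteq> Sd" for A unfolding proj_def by auto
  show "complete_lattice_morphism (Ldp Sp Sd) (leq_dp Sp Sd) (Pow Sd) (\<subseteq>) (proj Sp Sd I)"
    unfolding complete_lattice_morphism_def
  proof (intro conjI allI impI)
    show "proj Sp Sd I ` Ldp Sp Sd \<subseteq> Pow Sd" using pr by auto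
  next
    fix X s assume X: "X \<subseteq> Ldp Sp Sd" and s: "is_lub_on (Ldp Sp Sd) (leq_dp Sp Sd) X s"
    note L = lub_Ldp[OF assms(1) X]
    have ms: "\<forall>a\<in>Sd. mods Sp (s a) = (\<Union>A\<in>X. mods Sp (A a))"
      using lub_unique[OF po_Ldp s L(1)] L(2) by simp
    have sL: "s \<in> Ldp Sp Sd" using s unfolding is_lub_on_def by blast
    have eq: "proj Sp Sd I s = \<Union>(proj Sp Sd I ` X)"
      using ms X by (auto simp: proj_eq[OF sL Is] proj_eq[OF _ Is] subset_iff)
    show "is_lub_on (Pow Sd) (\<subseteq>) (proj Sp Sd I ` X) (proj Sp Sd I s)"
      unfolding is_lub_on_def eq using pr by blast
  next
    fix X s assume X: "X \<subseteq> Ldp Sp Sd" and s: "is_glb_on (Ldp Sp Sd) (leq_dp Sp Sd) X s"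
    note L = glb_Ldp[OF assms(1) X]
    have ms: "\<forall>a\<in>Sd. mods Sp (s a) = Pow Sp \<inter> (\<Inter>A\<in>X. mods Sp (A a))"
      using glb_unique[OF po_Ldp s L(1)] L(2) by simp
    have sL: "s \<in> Ldp Sp Sd" using s unfolding is_glb_on_def by blast
    have eq: "proj Sp Sd I s = Sd \<inter> \<Inter>(proj Sp Sd I ` X)"
      using ms X Is by (auto simp: proj_eq[OF sL Is] proj_eq[OF _ Is] subset_iff)
    show "is_glb_on (Pow Sd) (\<subseteq>) (proj Sp Sd I ` X) (proj Sp Sd I s)"
      unfolding is_glb_on_def eq using pr by blast
  qed
  show "proj Sp Sd I ` Ldp Sp Sd = Pow Sd"
  proof
    show "proj Sp Sd I ` Ldp Sp Sd \<subseteq> Pow Sd" using pr by auto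
  next
    show "Pow Sd \<subseteq> proj Sp Sd I ` Ldp Sp Sd"
    proof
      fix S assume "S \<in> Pow Sd"
      then have S: "S \<subseteq> Sd" by simp
      define A where "A = (\<lambda>a. if a \<in> Sd then mk Sp (if a \<in> S then Pow Sp else {}) else undefined)"
      have sub: "(if a \<in> S then Pow Sp else {}) \<subseteq> Pow Sp" for a by auto
      have AL: "A \<in> Ldp Sp Sd" unfolding A_def Ldp_def using mk_props(1)[OF assms(1) sub] by auto
      have m: "a \<in> Sd \<Longrightarrow> mods Sp (A a) = (if a \<in> S then Pow Sp else {})" for a
        unfolding A_def using mk_props(2)[OF assms(1) sub] by simp
      have "proj Sp Sd I A = S"
        unfolding proj_eq[OF AL Is] using S Is m by (auto split: if_splits)
      then show "S \<in> proj Sp Sd I ` Ldp Sp Sd" using AL by blast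
    qed
  qed
next
  fix x y assume x: "x \<in> Ldp Sp Sd" and y: "y \<in> Ldp Sp Sd"
  show "leq_dp Sp Sd x y \<longleftrightarrow> (\<forall>I\<in>Pow Sp. proj Sp Sd I x \<subseteq> proj Sp Sd I y)"
  proof
    assume "leq_dp Sp Sd x y"
    then show "\<forall>I\<in>Pow Sp. proj Sp Sd I x \<subseteq> proj Sp Sd I y"
      using x y by (auto simp: leq_dp_iff proj_eq)
  next
    assume h: "\<forall>I\<in>Pow Sp. proj Sp Sd I x \<subseteq> proj Sp Sd I y"
    have "mods Sp (x a) \<subseteq> mods Sp (y a)" if a: "a \<in> Sd" for a
    proof
      fix I assume I: "I \<in> mods Sp (x a)"
      then have Is: "I \<subseteq> Sp" using mods_sub by blast
      have "a \<in> proj Sp Sd I x" using I a by (simp add: proj_eq[OF x Is])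
      then have "a \<in> proj Sp Sd I y" using h Is by blast
      then show "I \<in> mods Sp (y a)" by (simp add: proj_eq[OF y Is])
    qed
    then show "leq_dp Sp Sd x y" using x y by (simp add: leq_dp_iff)
  qed
qed

end
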